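(* Let $m$ be a positive integer and let $a,d_1,d_2\in\mathbb{Z}/m\mathbb{Z}$ with $\gcd(d_1,m)=\gcd(d_2,m)$, and let $n$ be a positive integer with $n\equiv 0$ or $n\equiv -1\pmod{m/\gcd(d_1,m)}$. Then the arithmetic triangle $\nabla=\mathrm{AT}(a,d_1,d_2,n)$ satisfies $\mathfrak{m}_\nabla(x+\gcd(d_2-d_1,m))=\mathfrak{m}_\nabla(x)$ for all $x\in\mathbb{Z}/m\mathbb{Z}$.
   Context: For $d\in\mathbb{Z}/m\mathbb{Z}$, $\gcd(d,m)$ is the gcd of $m$ with any integer representative of $d$. The arithmetic triangle $\mathrm{AT}(a,d_1,d_2,n)$ is the family $(a+id_2+jd_1)_{(i,j)\in\mathbb{N}^2,\,i+j<n}$ of elements of $\mathbb{Z}/m\mathbb{Z}$, regarded as a multiset; $\mathfrak{m}_\nabla(x)$ is the number of $(i,j)$ with $i+j<n$ and $a+id_2+jd_1=x$. *)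

theory Defs
  imports "HOL-Number_Theory.Cong"
begin

text \<open>Elements of Z/mZ are represented by integer representatives; equality in Z/mZ
  is congruence modulo m.\<close>

definition at_mult :: "int \<Rightarrow> int \<Rightarrow> int \<Rightarrow> int \<Rightarrow> nat \<Rightarrow> int \<Rightarrow> nat" where
  "at_mult m a d1 d2 n x =
     card {(i, j). i + j < n \<and>
              [a + int i * d2 + int j * d1 = x] (mod m)} "

end

theory Submission
  imports Defs
begin

lemma at_mult_cong:
  assumes "[y = y'] (mod m)"
  shows "at_mult m a d1 d2 n y = at_mult m a d1 d2 n y'"
proof -
  have "\<And>t. [t = y] (mod m) \<longleftrightarrow> [t = y'] (mod m)"
    using assms by (meson cong_sym cong_trans)
  then show ?thesis unfolding at_mult_def by simp
qed

definition DD :: "int \<Rightarrow> int \<Rightarrow> int \<Rightarrow> int \<Rightarrow> nat \<Rightarrow> int \<Rightarrow> (nat \<times> nat) set" where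
  "DD m a d1 d2 n x = {(i, j). i + j \<le> n \<and> [a + int i * d2 + int j * d1 = x] (mod m)}"

definition cnt :: "int \<Rightarrow> int \<Rightarrow> int \<Rightarrow> nat \<Rightarrow> int \<Rightarrow> nat" where
  "cnt m a d n x = card {k. k \<le> n \<and> [a + int k * d = x] (mod m)}"

lemma DD_split1:
  "DD m a d1 d2 n x =
     (\<lambda>(i,j). (Suc i, j)) ` {(i, j). i + j < n \<and> [a + int i * d2 + int j * d1 = x - d2] (mod m)}
     \<union> (\<lambda>j. (0, j)) ` {k. k \<le> n \<and> [a + int k * d1 = x] (mod m)}"
proof -
  have e: "[a + int i * d2 + int j * d1 = x - d2] (mod m) \<longleftrightarrow>
        [a + int (Suc i) * d2 + int j * d1 = x] (mod m)" for i j
    unfolding cong_iff_dvd_diff by (simp add: algebra_simps)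
  show ?thesis
  proof (rule set_eqI, clarify)
    fix i j
    show "((i, j) \<in> DD m a d1 d2 n x) = ((i, j) \<in> (\<lambda>(i,j). (Suc i, j)) ` {(i, j). i + j < n \<and> [a + int i * d2 + int j * d1 = x - d2] (mod m)}
     \<union> (\<lambda>j. (0, j)) ` {k. k \<le> n \<and> [a + int k * d1 = x] (mod m)})"
    proof (cases i)
      case 0 then show ?thesis by (auto simp: DD_def)
    next
      case (Suc i') then show ?thesis using e[of i' j] by (auto simp: DD_def image_iff)
    qed
  qed
qed

lemma DD_split2:
  "DD m a d1 d2 n x =
     (\<lambda>(i,j). (i, Suc j)) ` {(i, j). i + j < n \<and> [a + int i * d2 + int j * d1 = x - d1] (mod m)}
     \<union> (\<lambda>i. (i, 0)) ` {k. k \<le> n \<and> [a + int k * d2 = x] (mod m)}"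
proof -
  have e: "[a + int i * d2 + int j * d1 = x - d1] (mod m) \<longleftrightarrow>
        [a + int i * d2 + int (Suc j) * d1 = x] (mod m)" for i j
    unfolding cong_iff_dvd_diff by (simp add: algebra_simps)
  show ?thesis
  proof (rule set_eqI, clarify)
    fix i j
    show "((i, j) \<in> DD m a d1 d2 n x) = ((i, j) \<in> (\<lambda>(i,j). (i, Suc j)) ` {(i, j). i + j < n \<and> [a + int i * d2 + int j * d1 = x - d1] (mod m)}
     \<union> (\<lambda>i. (i, 0)) ` {k. k \<le> n \<and> [a + int k * d2 = x] (mod m)})"
    proof (cases j)
      case 0 then show ?thesis by (auto simp: DD_def)
    next
      case (Suc j') then show ?thesis using e[of i j'] by (auto simp: DD_def image_iff)
    qed
  qed
qed

lemma fin_tri: "finite {(i, j). i + j < (n::nat) \<and> P i j}"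
  by (rule finite_subset[of _ "{..n} \<times> {..n}"]) auto

lemma key:
  "at_mult m a d1 d2 n (x - d2) + cnt m a d1 n x = at_mult m a d1 d2 n (x - d1) + cnt m a d2 n x"
proof -
  have "card (DD m a d1 d2 n x) = at_mult m a d1 d2 n (x - d2) + cnt m a d1 n x"
  proof -
    have i1: "inj_on (\<lambda>(i::nat,j::nat). (Suc i, j)) A" for A by (auto simp: inj_on_def)
    have i2: "inj_on (\<lambda>j::nat. (0::nat, j)) A" for A by (auto simp: inj_on_def)
    show ?thesis unfolding DD_split1 at_mult_def cnt_def
      by (subst card_Un_disjoint) (auto intro!: finite_imageI fin_tri simp: card_image[OF i1] card_image[OF i2])
  qed
  moreover have "card (DD m a d1 d2 n x) = at_mult m a d1 d2 n (x - d1) + cnt m a d2 n x"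
  proof -
    have i1: "inj_on (\<lambda>(i::nat,j::nat). (i, Suc j)) A" for A by (auto simp: inj_on_def)
    have i2: "inj_on (\<lambda>j::nat. (j, 0::nat)) A" for A by (auto simp: inj_on_def)
    show ?thesis unfolding DD_split2 at_mult_def cnt_def
      by (subst card_Un_disjoint) (auto intro!: finite_imageI fin_tri simp: card_image[OF i1] card_image[OF i2])
  qed
  ultimately show ?thesis by simp
qed

definition NN :: "int \<Rightarrow> int \<Rightarrow> nat \<Rightarrow> int \<Rightarrow> nat" where
  "NN m d L y = card {k. k < L \<and> [int k * d = y] (mod m)}"

lemma cnt_NN: "cnt m a d n x = NN m d (Suc n) (x - a)"
proof -
  have "\<And>k. [a + int k * d = x] (mod m) \<longleftrightarrow> [int k * d = x - a] (mod m)"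
    unfolding cong_iff_dvd_diff by (simp add: algebra_simps)
  then show ?thesis unfolding cnt_def NN_def by (simp add: less_Suc_eq_le)
qed

lemma NN_add:
  assumes "[int M * d = 0] (mod m)"
  shows "NN m d (M + L) y = NN m d M y + NN m d L y"
proof -
  have e: "[int (k + M) * d = y] (mod m) \<longleftrightarrow> [int k * d = y] (mod m)" for k
  proof -
    have "[int (k + M) * d = int k * d + 0] (mod m)"
      using assms unfolding cong_iff_dvd_diff by (simp add: algebra_simps)
    then show ?thesis by (metis add.right_neutral cong_sym cong_trans)
  qed
  have "{k. k < M + L \<and> [int k * d = y] (mod m)} =
      {k. k < M \<and> [int k * d = y] (mod m)} \<union> (\<lambda>k. k + M) ` {k. k < L \<and> [int k * d = y] (mod m)}"
  proof (rule set_eqI)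
    fix k show "(k \<in> {k. k < M + L \<and> [int k * d = y] (mod m)}) =
      (k \<in> {k. k < M \<and> [int k * d = y] (mod m)} \<union> (\<lambda>k. k + M) ` {k. k < L \<and> [int k * d = y] (mod m)})"
    proof (cases "k < M")
      case True then show ?thesis by auto
    next
      case False
      then obtain k' where k: "k = k' + M" by (metis add.commute le_add_diff_inverse not_less)
      then show ?thesis using e[of k'] False by (auto simp: image_iff)
    qed
  qed
  moreover have ij: "inj_on (\<lambda>k::nat. k + M) A" for A by (auto simp: inj_on_def)
  ultimately show ?thesis unfolding NN_def
    by (simp only:, subst card_Un_disjoint) (auto simp: card_image[OF ij])
qed

lemma NN_mult:
  assumes "[int M * d = 0] (mod m)"
  shows "NN m d (q * M) y = q * NN m d M y"
proof (induction q)
  case 0 then show ?case by (simp add: NN_def)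
next
  case (Suc q)
  have "NN m d (Suc q * M) y = NN m d (M + q * M) y" by simp
  also have "\<dots> = NN m d M y + NN m d (q * M) y" by (rule NN_add[OF assms])
  finally show ?case using Suc by simp
qed

lemma NN_Suc:
  "NN m d (Suc L) y = NN m d L y + (if [int L * d = y] (mod m) then 1 else 0)"
proof -
  have "{k. k < Suc L \<and> [int k * d = y] (mod m)} =
     {k. k < L \<and> [int k * d = y] (mod m)} \<union> (if [int L * d = y] (mod m) then {L} else {})"
    by (auto simp: less_Suc_eq)
  then show ?thesis unfolding NN_def by (simp add: card_Un_disjoint)
qed

lemma M_facts:
  fixes m d :: int
  assumes "m > 0" "int M = m div gcd d m"
  shows "m = gcd d m * int M" "[int M * d = 0] (mod m)" "int M > 0"
proof -
  have g: "gcd d m dvd m" "gcd d m dvd d" by auto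
  show m: "m = gcd d m * int M" using assms g by simp
  then obtain u where u: "d = gcd d m * u" using g by (metis dvd_def)
  have aux: "\<And>G U X. (X::int) = G * int M \<Longrightarrow> int M * (G*U) = X * U" by simp
  have "int M * d = m * u" using aux[OF m] u by metis
  then show "[int M * d = 0] (mod m)" by (simp add: cong_0_iff)
  have "int M \<noteq> 0" using m assms(1) by (metis mult_zero_right less_irrefl)
  then show "int M > 0" by simp
qed

lemma NN_one:
  fixes m d y :: int
  assumes "m > 0" "int M = m div gcd d m"
  shows "NN m d M y = (if gcd d m dvd y then 1 else 0)"
proof -
  define g where "g = gcd d m"
  have m: "m = g * int M" and Mpos: "int M > 0" using M_facts[OF assms] g_def by auto
  have gpos: "g > 0" using assms(1) g_def by simp
  obtain u where u: "d = g * u" unfolding g_def by (metis gcd_dvd1 dvd_def)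
  have "gcd d m = g * gcd u (int M)" using gcd_mult_distrib_int[of g u "int M"] gpos u m by simp
  then have "g * gcd u (int M) = g * 1" using g_def by simp
  then have "gcd u (int M) = 1" using gpos by (metis mult_cancel_left less_irrefl)
  then have cop: "coprime u (int M)" by (simp add: coprime_iff_gcd_eq_1)
  show ?thesis
  proof (cases "g dvd y")
    case False
    have "\<And>k. [int k * d = y] (mod m) \<Longrightarrow> False"
    proof -
      fix k assume "[int k * d = y] (mod m)"
      then have "m dvd int k * d - y" by (simp add: cong_iff_dvd_diff)
      then have h1: "g dvd int k * d - y" using m by (metis dvd_mult_left)
      have h2: "g dvd int k * d" using u by simp
      have "g dvd int k * d - (int k * d - y)" using dvd_diff[OF h2 h1] .
      then have "g dvd y" by simp
      then show False using False by simp
    qed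
    then have "{k. k < M \<and> [int k * d = y] (mod m)} = {}" by auto
    then show ?thesis using False g_def by (simp add: NN_def)
  next
    case True
    then obtain c where c: "y = g * c" by (metis dvd_def)
    obtain w where w: "[u * w = 1] (mod int M)" using cong_solve_coprime_int[OF cop] by blast
    have eq: "[int k * d = y] (mod m) \<longleftrightarrow> [int k * u = c] (mod int M)" for k
    proof -
      have "int k * d - y = g * (int k * u - c)" using u c by (simp add: algebra_simps)
      then show ?thesis unfolding cong_iff_dvd_diff m using gpos by simp
    qed
    define k0 where "k0 = nat ((c * w) mod int M)"
    have k0: "int k0 = (c * w) mod int M" using Mpos unfolding k0_def by simp
    have "{k. k < M \<and> [int k * d = y] (mod m)} = {k0}"
    proof (safe)
      fix k assume k: "k < M" "[int k * d = y] (mod m)"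
      then have "[int k * u = c] (mod int M)" using eq by blast
      then have "[int k * u * w = c * w] (mod int M)" by (rule cong_mult) simp
      moreover have "[int k * (u * w) = int k * 1] (mod int M)" using w by (rule cong_mult[OF cong_refl])
      ultimately have "[int k = c * w] (mod int M)"
        by (metis mult.assoc mult.right_neutral cong_sym cong_trans)
      then have "int k mod int M = (c * w) mod int M" by (simp add: cong_def)
      moreover have "int k mod int M = int k" using k(1) by simp
      ultimately show "k = k0" using k0 by simp
    next
      show "k0 < M" using k0 Mpos by (metis of_nat_less_iff pos_mod_bound)
    next
      have "[int k0 = c * w] (mod int M)" using k0 by (simp add: cong_def)
      then have "[int k0 * u = c * w * u] (mod int M)" by (rule cong_mult) simp
      moreover have "[c * (u * w) = c * 1] (mod int M)" using w by (rule cong_mult[OF cong_refl])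
      ultimately have "[int k0 * u = c] (mod int M)"
        by (metis mult.assoc mult.commute mult.right_neutral cong_trans)
      then show "[int k0 * d = y] (mod m)" using eq by blast
    qed
    then show ?thesis using True g_def by (simp add: NN_def)
  qed
qed

lemma NN_formula:
  fixes m d y :: int
  assumes "m > 0" "int M = m div gcd d m"
  shows "Suc n = q * M \<Longrightarrow> NN m d (Suc n) y = q * (if gcd d m dvd y then 1 else 0)"
    and "n = q * M \<Longrightarrow> NN m d (Suc n) y = q * (if gcd d m dvd y then 1 else 0)
            + (if [0 = y] (mod m) then 1 else 0)"
proof -
  have c: "[int M * d = 0] (mod m)" using M_facts[OF assms] by simp
  show "Suc n = q * M \<Longrightarrow> NN m d (Suc n) y = q * (if gcd d m dvd y then 1 else 0)"
    using NN_mult[OF c, of q y] NN_one[OF assms, of y] by simp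
  assume n: "n = q * M"
  have "[int q * (int M * d) = int q * 0] (mod m)" using c by (rule cong_mult[OF cong_refl])
  then have c2: "[int n * d = 0] (mod m)" using n by (simp add: mult.assoc)
  have "[int n * d = y] (mod m) \<longleftrightarrow> [0 = y] (mod m)"
    using c2 by (meson cong_sym cong_trans)
  then show "NN m d (Suc n) y = q * (if gcd d m dvd y then 1 else 0)
            + (if [0 = y] (mod m) then 1 else 0)"
    using NN_Suc[of m d n y] NN_mult[OF c, of q y] NN_one[OF assms, of y] n by simp
qed

lemma shift_int:
  fixes f :: "int \<Rightarrow> nat"
  assumes "\<And>y. f (y + e) = f y"
  shows "f (y + s * e) = f y"
proof -
  have nat_case: "f (y + int t * e) = f y" for t y
  proof (induction t)
    case 0 then show ?case by simp
  next
    case (Suc t)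
    have "f (y + int (Suc t) * e) = f ((y + int t * e) + e)"
      by (rule arg_cong[where f=f]) (simp add: algebra_simps)
    also have "\<dots> = f (y + int t * e)" by (rule assms)
    also have "\<dots> = f y" by (rule Suc)
    finally show ?case .
  qed
  show ?thesis
  proof (cases "s \<ge> 0")
    case True
    define t where "t = nat s"
    have "s = int t" using True unfolding t_def by simp
    then show ?thesis using nat_case[of y t] by simp
  next
    case False
    define t where "t = nat (- s)"
    have t: "s = - int t" using False unfolding t_def by simp
    have "f (y + s * e) = f ((y + s * e) + int t * e)" by (rule nat_case[symmetric])
    also have "(y + s * e) + int t * e = y" using t by (simp add: algebra_simps)
    finally show ?thesis .
  qed
qed

theorem theorem13:
  fixes m a d1 d2 x :: int and n :: nat
  assumes "m > 0"
    and "gcd d1 m = gcd d2 m"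
    and "n > 0"
    and "[int n = 0] (mod (m div gcd d1 m)) \<or> [int n = -1] (mod (m div gcd d1 m))"
  shows "at_mult m a d1 d2 n (x + gcd (d2 - d1) m) = at_mult m a d1 d2 n x"
proof -
  define M where "M = nat (m div gcd d1 m)"
  have M1: "int M = m div gcd d1 m" unfolding M_def using assms(1)
    by (simp add: div_int_pos_iff)
  have M2: "int M = m div gcd d2 m" using M1 assms(2) by simp
  have cnt_eq: "cnt m a d1 n y = cnt m a d2 n y" for y
  proof -
    from assms(4) have "M dvd n \<or> M dvd Suc n"
    proof
      assume "[int n = 0] (mod (m div gcd d1 m))"
      then have "int M dvd int n" using M1 by (simp add: cong_0_iff)
      then show ?thesis by simp
    next
      assume "[int n = -1] (mod (m div gcd d1 m))"
      then have "int M dvd int n + 1" using M1 by (simp add: cong_iff_dvd_diff)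
      then have "int M dvd int (Suc n)" by (simp add: add.commute)
      then have "M dvd Suc n" by (simp only: of_nat_dvd_iff)
      then show ?thesis by simp
    qed
    then show ?thesis
    proof
      assume "M dvd n"
      then obtain q where "n = q * M" by (metis dvd_def mult.commute)
      then show ?thesis unfolding cnt_NN
        using NN_formula(2)[OF assms(1) M1] NN_formula(2)[OF assms(1) M2] assms(2) by simp
    next
      assume "M dvd Suc n"
      then obtain q where "Suc n = q * M" by (metis dvd_def mult.commute)
      then show ?thesis unfolding cnt_NN
        using NN_formula(1)[OF assms(1) M1] NN_formula(1)[OF assms(1) M2] assms(2) by simp
    qed
  qed
  define f where "f = at_mult m a d1 d2 n"
  have step: "f (y + (d2 - d1)) = f y" for y
  proof -
    have "f (y + d2 - d2) + cnt m a d1 n (y + d2) = f (y + d2 - d1) + cnt m a d2 n (y + d2)"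
      unfolding f_def by (rule key)
    moreover have "y + d2 - d2 = y" "y + d2 - d1 = y + (d2 - d1)" by simp_all
    ultimately show ?thesis using cnt_eq[of "y + d2"] by simp
  qed
  obtain u v where uv: "u * (d2 - d1) + v * m = gcd (d2 - d1) m" using bezout_int by blast
  have "x + gcd (d2 - d1) m = (x + u * (d2 - d1)) + v * m"
    using uv by linarith
  then have "f (x + gcd (d2 - d1) m) = f ((x + u * (d2 - d1)) + v * m)"
    by (rule arg_cong)
  also have "\<dots> = f (x + u * (d2 - d1))"
    unfolding f_def by (rule at_mult_cong) (simp add: cong_iff_dvd_diff)
  also have "\<dots> = f x" using shift_int[of f "d2 - d1"] step by blast
  finally show ?thesis unfolding f_def .
qed

end
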